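(* Let $q$ be a prime power and $m\in\mathbb N$. Then the subring $R=\mathbb F_q+t\,\mathbb F_{q^m}[[t]]$ of the power series ring $\mathbb F_{q^m}[[t]]$ is a U-FFD.
   Context: An integral domain is a U-FFD if every nonzero element that is a unit or a finite product of irreducibles has only finitely many factorizations into irreducibles, counted up to order and associates. *)

theory Defs
  imports "HOL-Computational_Algebra.Primes" "HOL-Computational_Algebra.Formal_Power_Series"
begin

definition is_subring :: "'a::comm_ring_1 set \<Rightarrow> bool" where
  "is_subring R \<longleftrightarrow> 0 \<in> R \<and> 1 \<in> R \<and>
     (\<forall>a\<in>R. \<forall>b\<in>R. a + b \<in> R \<and> a - b \<in> R \<and> a * b \<in> R)"

definition is_subfield :: "'a::field set \<Rightarrow> bool" where
  "is_subfield K \<longleftrightarrow> is_subring K \<and> (\<forall>a\<in>K. a \<noteq> 0 \<longrightarrow> inverse a \<in> K)"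

definition unit_in :: "'a::comm_ring_1 set \<Rightarrow> 'a \<Rightarrow> bool" where
  "unit_in R u \<longleftrightarrow> u \<in> R \<and> (\<exists>v\<in>R. u * v = 1)"

definition irred_in :: "'a::comm_ring_1 set \<Rightarrow> 'a \<Rightarrow> bool" where
  "irred_in R x \<longleftrightarrow> x \<in> R \<and> x \<noteq> 0 \<and> \<not> unit_in R x \<and>
     (\<forall>a\<in>R. \<forall>b\<in>R. x = a * b \<longrightarrow> unit_in R a \<or> unit_in R b)"

definition assoc_in :: "'a::comm_ring_1 set \<Rightarrow> 'a \<Rightarrow> 'a \<Rightarrow> bool" where
  "assoc_in R x y \<longleftrightarrow> (\<exists>u. unit_in R u \<and> y = u * x)"

definition factorizations_in :: "'a::comm_ring_1 set \<Rightarrow> 'a \<Rightarrow> 'a list set" where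
  "factorizations_in R x = {fs. (\<forall>f\<in>set fs. irred_in R f) \<and> prod_list fs = x}"

definition fact_equiv :: "'a::comm_ring_1 set \<Rightarrow> 'a list \<Rightarrow> 'a list \<Rightarrow> bool" where
  "fact_equiv R fs gs \<longleftrightarrow> length fs = length gs \<and>
     (\<exists>p. bij_betw p {..<length fs} {..<length fs} \<and>
          (\<forall>i<length fs. assoc_in R (fs ! i) (gs ! p i)))"

text \<open>U-FFD: R is a subring (of an integral domain type, hence an integral domain) and every nonzero
  element that is a unit or a finite product of irreducibles has only finitely many
  factorizations up to order and associates.\<close>
definition U_FFD :: "'a::idom set \<Rightarrow> bool" where
  "U_FFD R \<longleftrightarrow> is_subring R \<and>
     (\<forall>x\<in>R. x \<noteq> 0 \<and> (unit_in R x \<or> factorizations_in R x \<noteq> {}) \<longrightarrow>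
        (\<exists>F. finite F \<and> F \<subseteq> factorizations_in R x \<and>
             (\<forall>fs\<in>factorizations_in R x. \<exists>gs\<in>F. fact_equiv R fs gs)))"

end

theory Submission
  imports Defs
begin

unbundle fps_syntax

lemma unit_nth0:
  fixes u :: "'a::field fps"
  assumes "unit_in R u" shows "u $ 0 \<noteq> 0"
proof
  assume h: "u $ 0 = 0"
  from assms obtain v where "u * v = 1" unfolding unit_in_def by blast
  hence "(u * v) $ 0 = 1" by simp
  thus False using h by simp
qed

lemma sub_ring:
  fixes K :: "'a::field set"
  assumes "is_subfield K"
  shows "is_subring {f :: 'a fps. f $ 0 \<in> K}"
  using assms unfolding is_subfield_def is_subring_def by auto

lemma unit_R:
  fixes K :: "'a::field set" and u :: "'a fps"
  assumes "is_subfield K" "u $ 0 \<in> K" "u $ 0 \<noteq> 0"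
  shows "unit_in {f :: 'a fps. f $ 0 \<in> K} u"
proof -
  have "inverse (u $ 0) \<in> K" using assms unfolding is_subfield_def by blast
  then show ?thesis unfolding unit_in_def using assms(2,3)
    by (intro conjI bexI[of _ "inverse u"]) (auto intro: inverse_mult_eq_1')
qed

lemma irred_sub:
  fixes K :: "'a::field set" and f :: "'a fps"
  assumes K: "is_subfield K" and irr: "irred_in {f :: 'a fps. f $ 0 \<in> K} f"
  shows "f \<noteq> 0 \<and> subdegree f = 1"
proof -
  let ?R = "{f :: 'a fps. f $ 0 \<in> K}"
  have fR: "f \<in> ?R" and nz: "f \<noteq> 0" and nu: "\<not> unit_in ?R f"
    using irr unfolding irred_in_def by auto
  have f0: "f $ 0 = 0"
    using unit_R[OF K, of f] fR nu by auto
  hence s1: "subdegree f \<ge> 1" using nz by (metis less_one not_le nth_subdegree_nonzero)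
  have "subdegree f = 1"
  proof (rule ccontr)
    assume "subdegree f \<noteq> 1"
    hence f1: "f $ 1 = 0" using s1 by (intro nth_less_subdegree_zero) simp
    have eq: "f = fps_X * fps_shift 1 f" using fps_shift_times_fps_X[OF s1] by (simp add: mult.commute)
    have "0 \<in> K" using K unfolding is_subfield_def is_subring_def by auto
    hence "fps_X \<in> ?R" "fps_shift 1 f \<in> ?R" using f1 by auto
    hence "unit_in ?R fps_X \<or> unit_in ?R (fps_shift 1 f)"
      using irr eq unfolding irred_in_def by blast
    thus False using unit_nth0 f1 by fastforce
  qed
  thus ?thesis using nz by simp
qed

lemma prod_subdeg:
  fixes fs :: "'a::field fps list"
  assumes "\<forall>f\<in>set fs. f \<noteq> 0 \<and> subdegree f = 1"
  shows "prod_list fs \<noteq> 0 \<and> subdegree (prod_list fs) = length fs"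
  using assms by (induction fs) auto

lemma assoc_sub:
  fixes K :: "'a::field set" and f g :: "'a fps"
  assumes K: "is_subfield K"
    and f: "f \<noteq> 0" "subdegree f = 1" and g: "g \<noteq> 0" "subdegree g = 1"
    and eq: "f $ 1 = g $ 1"
  shows "assoc_in {f :: 'a fps. f $ 0 \<in> K} f g"
proof -
  define a where "a = fps_shift 1 f"
  define b where "b = fps_shift 1 g"
  have fa: "f = fps_X * a" unfolding a_def using fps_shift_times_fps_X[of f] f by (simp add: mult.commute)
  have gb: "g = fps_X * b" unfolding b_def using fps_shift_times_fps_X[of g] g by (simp add: mult.commute)
  have c: "a $ 0 = b $ 0" "a $ 0 \<noteq> 0" unfolding a_def b_def using eq f
    by (auto, metis nth_subdegree_nonzero)
  have one: "1 \<in> K" using K unfolding is_subfield_def is_subring_def by auto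
  define u where "u = b * inverse a"
  have u0: "u $ 0 = 1" unfolding u_def using c by simp
  have "unit_in {f :: 'a fps. f $ 0 \<in> K} u" using unit_R[OF K, of u] u0 one by simp
  moreover have "g = u * f"
  proof -
    have "u * f = fps_X * b * (inverse a * a)" unfolding u_def fa by (simp add: ac_simps)
    also have "inverse a * a = 1" using c by (intro inverse_mult_eq_1)
    finally show ?thesis using gb by simp
  qed
  ultimately show ?thesis unfolding assoc_in_def by blast
qed

theorem mainTheorem10:
  fixes q m :: nat and K :: "'a::{field,finite} set"
  assumes "\<exists>p k. prime p \<and> k \<ge> 1 \<and> q = p ^ k"
    and "card (UNIV :: 'a set) = q ^ m"
    and "is_subfield K" and "card K = q"
  shows "U_FFD {f :: 'a fps. fps_nth f 0 \<in> K}"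
proof -
  note K = assms(3)
  let ?R = "{f :: 'a fps. f $ 0 \<in> K}"
  have main: "\<exists>F. finite F \<and> F \<subseteq> factorizations_in ?R x \<and>
             (\<forall>fs\<in>factorizations_in ?R x. \<exists>gs\<in>F. fact_equiv ?R fs gs)" for x
  proof -
    let ?Fa = "factorizations_in ?R x"
    let ?key = "\<lambda>fs::'a fps list. map (\<lambda>f. f $ 1) fs"
    define rep where "rep k = (SOME fs. fs \<in> ?Fa \<and> ?key fs = k)" for k
    define F where "F = rep ` (?key ` ?Fa)"
    have len: "length fs = subdegree x" if "fs \<in> ?Fa" for fs
    proof -
      have "\<forall>f\<in>set fs. f \<noteq> 0 \<and> subdegree f = 1"
        using that irred_sub[OF K] unfolding factorizations_in_def by blast
      from prod_subdeg[OF this] that show ?thesis unfolding factorizations_in_def by simp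
    qed
    have "?key ` ?Fa \<subseteq> {l. length l = subdegree x}" using len by auto
    moreover have "finite {l :: 'a list. length l = subdegree x}"
      using finite_lists_length_eq[OF finite_UNIV, of "subdegree x"] by simp
    ultimately have "finite (?key ` ?Fa)" by (rule finite_subset)
    hence fin: "finite F" unfolding F_def by simp
    have repP: "rep (?key fs) \<in> ?Fa \<and> ?key (rep (?key fs)) = ?key fs" if "fs \<in> ?Fa" for fs
      unfolding rep_def by (rule someI[of _ fs]) (use that in simp)
    have sub: "F \<subseteq> ?Fa" unfolding F_def using repP by auto
    have "\<exists>gs\<in>F. fact_equiv ?R fs gs" if fs: "fs \<in> ?Fa" for fs
    proof (intro bexI)
      let ?gs = "rep (?key fs)"
      show "?gs \<in> F" unfolding F_def using fs by blast
      have gs: "?gs \<in> ?Fa" and k: "?key ?gs = ?key fs" using repP[OF fs] by auto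
      have l: "length ?gs = length fs" using len gs fs by simp
      have "assoc_in ?R (fs ! i) (?gs ! i)" if i: "i < length fs" for i
      proof -
        have "irred_in ?R (fs ! i)" using fs i unfolding factorizations_in_def by auto
        hence a: "fs ! i \<noteq> 0 \<and> subdegree (fs ! i) = 1" using irred_sub[OF K] by blast
        have "irred_in ?R (?gs ! i)" using gs i l unfolding factorizations_in_def by auto
        hence b: "?gs ! i \<noteq> 0 \<and> subdegree (?gs ! i) = 1" using irred_sub[OF K] by blast
        have "(fs ! i) $ 1 = (?gs ! i) $ 1" using arg_cong[OF k, of "\<lambda>l. l ! i"] i l by simp
        thus ?thesis using assoc_sub[OF K] a b by blast
      qed
      thus "fact_equiv ?R fs ?gs" unfolding fact_equiv_def using l
        by (intro conjI exI[of _ id]) auto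
    qed
    thus ?thesis using fin sub by blast
  qed
  show ?thesis unfolding U_FFD_def using sub_ring[OF K] main by (intro conjI ballI impI) simp_all
qed

end
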